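(* Let $\mathfrak{F}$ be any tube $\boldsymbol{x}(u,\phi)=\boldsymbol{a}(u)+r\cos\phi\,\boldsymbol{h}(u)+r\sin\phi\,\boldsymbol{b}(u)$ in $\mathbb{E}^3$ about a regular unit-speed curve $\boldsymbol{a}$ of finite length with curvature $\kappa>0$, with $0<r<\min 1/|\kappa|$, and let $W$ be any open portion of $\mathfrak{F}$ on which $\cos\phi\neq0$ (equivalently $K\neq0$). Then there is no constant real $3\times3$ matrix $A$ such that the Gauss map $\boldsymbol{N}$ of $\mathfrak{F}$ satisfies $\Delta^{II}\boldsymbol{N}=A\boldsymbol{N}$ on $W$; i.e., every tube in $\mathbb{E}^3$ is of coordinate infinite type Gauss map with respect to the second fundamental form. *)

theory Defs
  imports "HOL-Analysis.Analysis" "HOL-Analysis.Cross3"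
begin

definition vd :: "nat \<Rightarrow> (real \<Rightarrow> 'a::real_normed_vector) \<Rightarrow> real \<Rightarrow> 'a" where
  "vd k f = ((\<lambda>g u. vector_derivative g (at u)) ^^ k) f"

definition smooth_curve_on :: "real set \<Rightarrow> (real \<Rightarrow> 'a::real_normed_vector) \<Rightarrow> bool" where
  "smooth_curve_on I f \<longleftrightarrow> (\<forall>k. \<forall>u\<in>I. vd k f differentiable (at u))"

definition curvature :: "(real \<Rightarrow> real^3) \<Rightarrow> real \<Rightarrow> real" where
  "curvature a u = norm (vd 2 a u)"

definition tangent :: "(real \<Rightarrow> real^3) \<Rightarrow> real \<Rightarrow> real^3" where
  "tangent a u = vd 1 a u"

definition principal_normal :: "(real \<Rightarrow> real^3) \<Rightarrow> real \<Rightarrow> real^3" where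
  "principal_normal a u = (1 / curvature a u) *\<^sub>R vd 2 a u"

definition binormal :: "(real \<Rightarrow> real^3) \<Rightarrow> real \<Rightarrow> real^3" where
  "binormal a u = cross3 (tangent a u) (principal_normal a u)"

definition tube :: "(real \<Rightarrow> real^3) \<Rightarrow> real \<Rightarrow> real \<Rightarrow> real \<Rightarrow> real^3" where
  "tube a r u \<phi> = a u + (r * cos \<phi>) *\<^sub>R principal_normal a u + (r * sin \<phi>) *\<^sub>R binormal a u"

definition pd_u :: "(real \<Rightarrow> real \<Rightarrow> real^3) \<Rightarrow> real \<Rightarrow> real \<Rightarrow> real^3" where
  "pd_u F u v = vector_derivative (\<lambda>s. F s v) (at u)"

definition pd_v :: "(real \<Rightarrow> real \<Rightarrow> real^3) \<Rightarrow> real \<Rightarrow> real \<Rightarrow> real^3" where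
  "pd_v F u v = vector_derivative (\<lambda>t. F u t) (at v)"

definition gauss_map :: "(real \<Rightarrow> real \<Rightarrow> real^3) \<Rightarrow> real \<Rightarrow> real \<Rightarrow> real^3" where
  "gauss_map X u v = (let c = cross3 (pd_u X u v) (pd_v X u v) in (1 / norm c) *\<^sub>R c)"

definition II_e :: "(real \<Rightarrow> real \<Rightarrow> real^3) \<Rightarrow> real \<Rightarrow> real \<Rightarrow> real" where
  "II_e X u v = pd_u (pd_u X) u v \<bullet> gauss_map X u v"

definition II_f :: "(real \<Rightarrow> real \<Rightarrow> real^3) \<Rightarrow> real \<Rightarrow> real \<Rightarrow> real" where
  "II_f X u v = pd_v (pd_u X) u v \<bullet> gauss_map X u v"

definition II_g :: "(real \<Rightarrow> real \<Rightarrow> real^3) \<Rightarrow> real \<Rightarrow> real \<Rightarrow> real" where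
  "II_g X u v = pd_v (pd_v X) u v \<bullet> gauss_map X u v"

definition II_det :: "(real \<Rightarrow> real \<Rightarrow> real^3) \<Rightarrow> real \<Rightarrow> real \<Rightarrow> real" where
  "II_det X u v = II_e X u v * II_g X u v - (II_f X u v)^2"

(* Laplace operator of the second fundamental form, applied componentwise to F:
   Delta^II F = -1/sqrt|D| * sum_ij d_i( sqrt|D| h^ij d_j F ),  (h^ij) = II^{-1} *)
definition lap_II :: "(real \<Rightarrow> real \<Rightarrow> real^3) \<Rightarrow> (real \<Rightarrow> real \<Rightarrow> real^3) \<Rightarrow> real \<Rightarrow> real \<Rightarrow> real^3" where
  "lap_II X F u v =
     - (1 / sqrt \<bar>II_det X u v\<bar>) *\<^sub>R
       ( pd_u (\<lambda>s t. (sqrt \<bar>II_det X s t\<bar> / II_det X s t) *\<^sub>R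
                 (II_g X s t *\<^sub>R pd_u F s t - II_f X s t *\<^sub>R pd_v F s t)) u v
       + pd_v (\<lambda>s t. (sqrt \<bar>II_det X s t\<bar> / II_det X s t) *\<^sub>R
                 (II_e X s t *\<^sub>R pd_v F s t - II_f X s t *\<^sub>R pd_u F s t)) u v )"

end

theory Submission
  imports Defs "HOL-Computational_Algebra.Polynomial"
begin



lemma vd_Suc: "vd (Suc k) f = (\<lambda>u. vector_derivative (vd k f) (at u))"
  by (simp add: vd_def)
lemma vd_0[simp]: "vd 0 f = f"
  by (simp add: vd_def)

lemma hvd_inner:
  assumes "(f has_vector_derivative f') (at x)" "(g has_vector_derivative g') (at x)"
  shows "((\<lambda>x. f x \<bullet> g x) has_real_derivative (f x \<bullet> g' + f' \<bullet> g x)) (at x)"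
  using bounded_bilinear.has_vector_derivative[OF bounded_bilinear_inner assms]
  by (simp add: has_real_derivative_iff_has_vector_derivative)

lemma bb_cross: "bounded_bilinear (cross3 :: real^3 \<Rightarrow> real^3 \<Rightarrow> real^3)"
  using bilinear_conv_bounded_bilinear bilinear_cross by blast

lemma hvd_cross:
  assumes "(f has_vector_derivative f') (at x)" "(g has_vector_derivative g') (at x)"
  shows "((\<lambda>x. cross3 (f x) (g x)) has_vector_derivative (cross3 (f x) g' + cross3 f' (g x))) (at x)"
  using bounded_bilinear.has_vector_derivative[OF bb_cross assms] by simp

lemma const_deriv:
  assumes "(f has_real_derivative D) (at u)" "open S" "u \<in> S" "\<And>s. s \<in> S \<Longrightarrow> f s = c"
  shows "D = 0"
proof -
  have "((\<lambda>s. c) has_real_derivative 0) (at u)" by simp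
  then have "(f has_real_derivative 0) (at u)"
    by (rule has_field_derivative_transform_within_open[OF _ assms(2,3)]) (use assms(4) in auto)
  then show ?thesis using assms(1) DERIV_unique by blast
qed

lemma frame_decomp:
  fixes T H v :: "real^3"
  assumes "T \<bullet> T = 1" "H \<bullet> H = 1" "T \<bullet> H = 0"
  shows "v = (v \<bullet> T) *\<^sub>R T + (v \<bullet> H) *\<^sub>R H + (v \<bullet> cross3 T H) *\<^sub>R cross3 T H"
proof -
  define B where "B = cross3 T H"
  define w where "w = v - ((v \<bullet> T) *\<^sub>R T + (v \<bullet> H) *\<^sub>R H + (v \<bullet> B) *\<^sub>R B)"
  have BT: "B \<bullet> T = 0" "B \<bullet> H = 0" unfolding B_def by (simp_all add: dot_cross_self inner_commute)
  have BB: "B \<bullet> B = 1"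
    using norm_cross_dot[of T H] assms unfolding B_def
    by (simp add: norm_eq_sqrt_inner power2_eq_square)
  have aux: "H \<bullet> T = 0" "T \<bullet> B = 0" "H \<bullet> B = 0" using assms BT by (simp_all add: inner_commute)
  have wT: "w \<bullet> T = 0" "w \<bullet> H = 0" "w \<bullet> B = 0"
    unfolding w_def using assms BT BB aux
    by (simp_all add: inner_diff_left inner_add_left)
  have "cross3 w B = 0" unfolding B_def Lagrange using wT by simp
  then have "(norm w * norm B)^2 = 0" using norm_cross_dot[of w B] wT by simp
  moreover have "norm B = 1" using BB by (simp add: norm_eq_sqrt_inner)
  ultimately have "w = 0" by simp
  then show ?thesis unfolding w_def B_def by simp
qed




locale tubeL =
  fixes a :: "real \<Rightarrow> real^3" and \<alpha> \<beta> r :: real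
  assumes sm: "smooth_curve_on {\<alpha><..<\<beta>} a"
    and unit: "\<forall>u\<in>{\<alpha><..<\<beta>}. norm (vd 1 a u) = 1"
    and kpos: "\<forall>u\<in>{\<alpha><..<\<beta>}. curvature a u > 0"
    and r0: "0 < r"
    and rINF: "r < (INF u\<in>{\<alpha><..<\<beta>}. 1 / \<bar>curvature a u\<bar>)"
begin

abbreviation "I \<equiv> {\<alpha><..<\<beta>}"
abbreviation "T \<equiv> tangent a"
abbreviation "H \<equiv> principal_normal a"
abbreviation "B \<equiv> binormal a"
abbreviation "\<kappa> \<equiv> curvature a"
definition "Hd u = vector_derivative H (at u)"
definition "Bd u = vector_derivative B (at u)"
definition "\<tau> u = Hd u \<bullet> B u"
definition "kd u = (vd 2 a u \<bullet> vd 3 a u) / \<kappa> u"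

lemma hvd: "u \<in> I \<Longrightarrow> (vd k a has_vector_derivative vd (Suc k) a u) (at u)"
  using sm unfolding smooth_curve_on_def vd_Suc
  by (simp add: vector_derivative_works[symmetric])

lemma kp: "u \<in> I \<Longrightarrow> \<kappa> u > 0" using kpos by auto

lemma rk: "u \<in> I \<Longrightarrow> r * \<kappa> u < 1"
proof -
  assume u: "u \<in> I"
  have "bdd_below ((\<lambda>u. 1 / \<bar>\<kappa> u\<bar>) ` I)" by (rule bdd_belowI[of _ 0]) auto
  then have "(INF u\<in>I. 1 / \<bar>\<kappa> u\<bar>) \<le> 1 / \<bar>\<kappa> u\<bar>" using u by (rule cINF_lower)
  then have "r < 1 / \<kappa> u" using rINF kp[OF u] by simp
  then show ?thesis using kp[OF u] by (simp add: field_simps)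
qed

lemma delta_pos: "u \<in> I \<Longrightarrow> 0 < 1 - r * \<kappa> u * cos t"
proof -
  assume u: "u \<in> I"
  have "r * \<kappa> u * cos t \<le> r * \<kappa> u" using r0 kp[OF u] by (simp add: mult_left_le)
  then show ?thesis using rk[OF u] by simp
qed

lemma TT: "u \<in> I \<Longrightarrow> T u \<bullet> T u = 1"
  using unit by (simp add: tangent_def norm_eq_sqrt_inner)

lemma A2: "u \<in> I \<Longrightarrow> vd 2 a u = \<kappa> u *\<^sub>R H u"
  using kp[of u] by (simp add: principal_normal_def)

lemma HH: "u \<in> I \<Longrightarrow> H u \<bullet> H u = 1"
  using kp[of u] by (simp add: principal_normal_def curvature_def norm_eq_sqrt_inner)

lemma TH: "u \<in> I \<Longrightarrow> T u \<bullet> H u = 0"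
proof -
  assume u: "u \<in> I"
  have "((\<lambda>s. T s \<bullet> T s) has_real_derivative (T u \<bullet> vd 2 a u + vd 2 a u \<bullet> T u)) (at u)"
    unfolding tangent_def using hvd[OF u, of 1] by (intro hvd_inner) (simp_all add: numeral_2_eq_2)
  then have "T u \<bullet> vd 2 a u + vd 2 a u \<bullet> T u = 0"
    by (rule const_deriv[where S=I]) (use u in \<open>auto simp: TT\<close>)
  then show ?thesis using A2[OF u] kp[OF u] by (simp add: inner_commute)
qed

lemma kderiv: "u \<in> I \<Longrightarrow> (\<kappa> has_real_derivative kd u) (at u)"
proof -
  assume u: "u \<in> I"
  have e: "\<kappa> = (\<lambda>s. sqrt (vd 2 a s \<bullet> vd 2 a s))" by (auto simp: curvature_def norm_eq_sqrt_inner)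
  have "((\<lambda>s. sqrt (vd 2 a s \<bullet> vd 2 a s)) has_real_derivative
      inverse (sqrt (vd 2 a u \<bullet> vd 2 a u)) / 2 * (vd 2 a u \<bullet> vd 3 a u + vd 3 a u \<bullet> vd 2 a u)) (at u)"
    apply (rule DERIV_real_sqrt[THEN DERIV_chain2])
    using kp[OF u] apply (simp add: curvature_def norm_eq_sqrt_inner)
    using hvd[OF u, of 2] by (intro hvd_inner) (simp_all add: numeral_3_eq_3 numeral_2_eq_2)
  then show ?thesis unfolding e kd_def by (simp add: inner_commute curvature_def norm_eq_sqrt_inner field_simps)
qed

end



lemma differentiable_cross:
  "f differentiable (at x) \<Longrightarrow> g differentiable (at x) \<Longrightarrow>
    (\<lambda>x. cross3 (f x) (g x :: real^3)) differentiable (at x)"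
  unfolding differentiable_def using bounded_bilinear.FDERIV[OF bb_cross] by blast

lemma diff_transform:
  assumes "f differentiable (at u)" "open S" "u \<in> S" "\<And>s. s \<in> S \<Longrightarrow> f s = g s"
  shows "g differentiable (at u)"
  using assms has_derivative_transform_within_open unfolding differentiable_def by blast

context tubeL begin

definition "Hf u = (1 / \<kappa> u) *\<^sub>R vd 3 a u + (- (kd u * inverse (\<kappa> u ^ 2))) *\<^sub>R vd 2 a u"

lemma Hderiv: "u \<in> I \<Longrightarrow> (H has_vector_derivative Hf u) (at u)"
proof -
  assume u: "u \<in> I"
  have d1: "((\<lambda>s. inverse (\<kappa> s)) has_real_derivative (- (kd u * inverse (\<kappa> u ^ Suc (Suc 0))))) (at u)"
    using DERIV_inverse_fun[OF kderiv[OF u]] kp[OF u] by simp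
  have "((\<lambda>s. inverse (\<kappa> s) *\<^sub>R vd 2 a s) has_vector_derivative
      (inverse (\<kappa> u) *\<^sub>R vd 3 a u + (- (kd u * inverse (\<kappa> u ^ Suc (Suc 0)))) *\<^sub>R vd 2 a u)) (at u)"
    using has_vector_derivative_scaleR[OF d1 hvd[OF u, of 2]] by (simp add: numeral_3_eq_3 numeral_2_eq_2)
  then show ?thesis unfolding Hf_def principal_normal_def
    by (simp add: divide_inverse numeral_2_eq_2)
qed

lemma Hd_eq: "u \<in> I \<Longrightarrow> Hd u = Hf u"
  unfolding Hd_def using Hderiv vector_derivative_at by blast

lemma Hd_deriv: "u \<in> I \<Longrightarrow> (H has_vector_derivative Hd u) (at u)"
  using Hderiv Hd_eq by simp

lemma vd_diff: "u \<in> I \<Longrightarrow> vd k a differentiable (at u)"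
  using hvd differentiableI_vector by blast

lemma k_diff: "u \<in> I \<Longrightarrow> \<kappa> differentiable (at u)"
  using kderiv differentiableI unfolding has_field_derivative_def by blast

lemma kd_diff: "u \<in> I \<Longrightarrow> kd differentiable (at u)"
proof -
  assume u: "u \<in> I"
  have "(\<lambda>s. (vd 2 a s \<bullet> vd 3 a s) / \<kappa> s) differentiable (at u)"
    using vd_diff[OF u] k_diff[OF u] kp[OF u] by (intro differentiable_divide differentiable_inner) auto
  then show ?thesis unfolding kd_def[abs_def] .
qed

lemma Hd_diff: "u \<in> I \<Longrightarrow> Hd differentiable (at u)"
proof -
  assume u: "u \<in> I"
  have "Hf differentiable (at u)"
    unfolding Hf_def[abs_def] using vd_diff[OF u] k_diff[OF u] kd_diff[OF u] kp[OF u]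
    by (intro derivative_intros) auto
  then show ?thesis by (rule diff_transform[where S=I]) (use u Hd_eq in auto)
qed

lemma H_diff: "u \<in> I \<Longrightarrow> H differentiable (at u)"
  using Hd_deriv differentiableI_vector by blast

lemma T_deriv: "u \<in> I \<Longrightarrow> (T has_vector_derivative vd 2 a u) (at u)"
  unfolding tangent_def using hvd[of u 1] by (simp add: numeral_2_eq_2)

lemma T_diff: "u \<in> I \<Longrightarrow> T differentiable (at u)"
  using T_deriv differentiableI_vector by blast

lemma Bderiv: "u \<in> I \<Longrightarrow> (B has_vector_derivative (cross3 (T u) (Hd u) + cross3 (vd 2 a u) (H u))) (at u)"
  unfolding binormal_def[abs_def] using hvd_cross[OF T_deriv Hd_deriv] .

lemma Bd_eq: "u \<in> I \<Longrightarrow> Bd u = cross3 (T u) (Hd u) + cross3 (vd 2 a u) (H u)"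
  unfolding Bd_def using Bderiv vector_derivative_at by blast

lemma Bd_deriv: "u \<in> I \<Longrightarrow> (B has_vector_derivative Bd u) (at u)"
  using Bderiv Bd_eq by simp

lemma Bd_diff: "u \<in> I \<Longrightarrow> Bd differentiable (at u)"
proof -
  assume u: "u \<in> I"
  have "(\<lambda>s. cross3 (T s) (Hd s) + cross3 (vd 2 a s) (H s)) differentiable (at u)"
    using T_diff[OF u] Hd_diff[OF u] vd_diff[OF u] H_diff[OF u]
    by (intro differentiable_add differentiable_cross) auto
  then show ?thesis by (rule diff_transform[where S=I]) (use u Bd_eq in auto)
qed

lemma B_diff: "u \<in> I \<Longrightarrow> B differentiable (at u)"
  using Bd_deriv differentiableI_vector by blast

lemma HdH: "u \<in> I \<Longrightarrow> H u \<bullet> Hd u = 0"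
proof -
  assume u: "u \<in> I"
  have "((\<lambda>s. H s \<bullet> H s) has_real_derivative (H u \<bullet> Hd u + Hd u \<bullet> H u)) (at u)"
    using Hd_deriv[OF u] by (intro hvd_inner)
  then have "H u \<bullet> Hd u + Hd u \<bullet> H u = 0"
    by (rule const_deriv[where S=I]) (use u in \<open>auto simp: HH\<close>)
  then show ?thesis by (simp add: inner_commute)
qed

lemma HdT: "u \<in> I \<Longrightarrow> T u \<bullet> Hd u = - \<kappa> u"
proof -
  assume u: "u \<in> I"
  have "((\<lambda>s. T s \<bullet> H s) has_real_derivative (T u \<bullet> Hd u + vd 2 a u \<bullet> H u)) (at u)"
    using Hd_deriv[OF u] T_deriv[OF u] by (intro hvd_inner)
  then have "T u \<bullet> Hd u + vd 2 a u \<bullet> H u = 0"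
    by (rule const_deriv[where S=I]) (use u in \<open>auto simp: TH\<close>)
  then show ?thesis using A2[OF u] HH[OF u] by simp
qed

lemma fr:
  assumes u: "u \<in> I"
  shows "B u \<bullet> B u = 1" "T u \<bullet> B u = 0" "H u \<bullet> B u = 0" "B u \<bullet> T u = 0" "B u \<bullet> H u = 0"
    "H u \<bullet> T u = 0"
    "cross3 (T u) (H u) = B u" "cross3 (H u) (T u) = - B u"
    "cross3 (T u) (B u) = - H u" "cross3 (B u) (T u) = H u"
    "cross3 (H u) (B u) = T u" "cross3 (B u) (H u) = - T u"
proof -
  note f = TT[OF u] HH[OF u] TH[OF u]
  have HT: "H u \<bullet> T u = 0" using f by (simp add: inner_commute)
  show BB: "B u \<bullet> B u = 1"
    using norm_cross_dot[of "T u" "H u"] f unfolding binormal_def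
    by (simp add: norm_eq_sqrt_inner power2_eq_square)
  show "T u \<bullet> B u = 0" "H u \<bullet> B u = 0" "B u \<bullet> T u = 0" "B u \<bullet> H u = 0" "H u \<bullet> T u = 0"
    using HT unfolding binormal_def by (simp_all add: dot_cross_self inner_commute)
  show "cross3 (T u) (H u) = B u" unfolding binormal_def tangent_def ..
  then show "cross3 (H u) (T u) = - B u" by (metis cross_skew)
  show TB: "cross3 (T u) (B u) = - H u" unfolding binormal_def Lagrange using f HT
    by (simp add: tangent_def)
  then show "cross3 (B u) (T u) = H u" by (metis cross_skew minus_minus)
  show HB: "cross3 (H u) (B u) = T u" unfolding binormal_def Lagrange using f HT
    by (simp add: tangent_def)
  then show "cross3 (B u) (H u) = - T u" by (metis cross_skew)
qed

lemma Hd_frame: "u \<in> I \<Longrightarrow> Hd u = (- \<kappa> u) *\<^sub>R T u + \<tau> u *\<^sub>R B u"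
proof -
  assume u: "u \<in> I"
  have "Hd u = (Hd u \<bullet> T u) *\<^sub>R T u + (Hd u \<bullet> H u) *\<^sub>R H u + (Hd u \<bullet> cross3 (T u) (H u)) *\<^sub>R cross3 (T u) (H u)"
    by (rule frame_decomp) (use TT[OF u] HH[OF u] TH[OF u] in auto)
  then show ?thesis using HdT[OF u] HdH[OF u] fr[OF u] unfolding \<tau>_def
    by (simp add: inner_commute)
qed

lemma Bd_frame: "u \<in> I \<Longrightarrow> Bd u = (- \<tau> u) *\<^sub>R H u"
proof -
  assume u: "u \<in> I"
  show ?thesis unfolding Bd_eq[OF u] Hd_frame[OF u] A2[OF u] using fr[OF u]
    by (simp add: cross_add_right cross_mult_right cross_mult_left Cross3.right_diff_distrib)
qed

end



context tubeL begin

abbreviation "X \<equiv> tube a r"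
definition "\<delta> s t = 1 - r * \<kappa> s * cos t"
definition "Xu s t = \<delta> s t *\<^sub>R T s + (r * \<tau> s) *\<^sub>R (cos t *\<^sub>R B s - sin t *\<^sub>R H s)"
definition "Xv s t = (- (r * sin t)) *\<^sub>R H s + (r * cos t) *\<^sub>R B s"
definition "Nf s t = - (cos t *\<^sub>R H s + sin t *\<^sub>R B s)"

lemma Xs_deriv: "s \<in> I \<Longrightarrow> ((\<lambda>s. X s t) has_vector_derivative (T s + (r * cos t) *\<^sub>R Hd s + (r * sin t) *\<^sub>R Bd s)) (at s)"
  unfolding tube_def using hvd[of s 0] Hd_deriv[of s] Bd_deriv[of s]
  by (auto intro!: derivative_eq_intros simp: tangent_def)

lemma pdu_X: "s \<in> I \<Longrightarrow> pd_u X s t = Xu s t"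
proof -
  assume s: "s \<in> I"
  have "pd_u X s t = T s + (r * cos t) *\<^sub>R Hd s + (r * sin t) *\<^sub>R Bd s"
    unfolding pd_u_def using Xs_deriv[OF s] vector_derivative_at by blast
  also have "\<dots> = Xu s t" unfolding Xu_def \<delta>_def Hd_frame[OF s] Bd_frame[OF s]
    by (simp add: algebra_simps)
  finally show ?thesis .
qed

lemma Xt_deriv: "((\<lambda>t. X s t) has_vector_derivative Xv s t) (at t)"
  unfolding tube_def Xv_def
  by (auto intro!: derivative_eq_intros simp: algebra_simps)

lemma pdv_X: "pd_v X s t = Xv s t"
  unfolding pd_v_def using Xt_deriv vector_derivative_at by blast

lemma cross_XuXv: "s \<in> I \<Longrightarrow> cross3 (Xu s t) (Xv s t) = (- (r * \<delta> s t)) *\<^sub>R (cos t *\<^sub>R H s + sin t *\<^sub>R B s)"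
proof -
  assume s: "s \<in> I"
  show ?thesis unfolding Xu_def Xv_def using fr[OF s]
    by (simp add: cross_add_left cross_add_right cross_mult_left cross_mult_right
      Cross3.right_diff_distrib Cross3.left_diff_distrib algebra_simps)
qed


lemma norm_CS: "s \<in> I \<Longrightarrow> norm (cos t *\<^sub>R H s + sin t *\<^sub>R B s) = 1"
  using fr[of s] HH[of s] unfolding norm_eq_sqrt_inner
  by (simp add: inner_add_left inner_add_right inner_commute power2_eq_square[symmetric])

lemma gauss: "s \<in> I \<Longrightarrow> gauss_map X s t = Nf s t"
proof -
  assume s: "s \<in> I"
  have d: "0 < r * \<delta> s t" using r0 delta_pos[OF s] unfolding \<delta>_def by simp
  have n: "norm ((- (r * \<delta> s t)) *\<^sub>R (cos t *\<^sub>R H s + sin t *\<^sub>R B s)) = r * \<delta> s t"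
    using d norm_CS[OF s, of t] by simp
  show ?thesis unfolding gauss_map_def Let_def pdu_X[OF s] pdv_X cross_XuXv[OF s] n Nf_def
    using d r0 delta_pos[OF s, of t] by (simp add: \<delta>_def)
qed

lemma Nf_unit: "s \<in> I \<Longrightarrow> Nf s t \<bullet> Nf s t = 1"
  using fr[of s] HH[of s] unfolding Nf_def
  by (simp add: inner_add_left inner_add_right inner_diff_left inner_diff_right inner_commute power2_eq_square[symmetric])

lemma Nf_T: "s \<in> I \<Longrightarrow> T s \<bullet> Nf s t = 0"
  using fr[of s] TH[of s] unfolding Nf_def
  by (simp add: inner_add_left inner_add_right inner_diff_left inner_diff_right)

lemma Nf_u_deriv: "s \<in> I \<Longrightarrow> ((\<lambda>s. Nf s t) has_vector_derivative
    (- (cos t *\<^sub>R Hd s + sin t *\<^sub>R Bd s))) (at s)"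
  unfolding Nf_def using Hd_deriv[of s] Bd_deriv[of s]
  by (auto intro!: derivative_eq_intros)

definition "Nu s t = (\<kappa> s * cos t) *\<^sub>R T s + \<tau> s *\<^sub>R (sin t *\<^sub>R H s - cos t *\<^sub>R B s)"
definition "Nv s t = sin t *\<^sub>R H s - cos t *\<^sub>R B s"

lemma pdu_N: "s \<in> I \<Longrightarrow> pd_u (gauss_map X) s t = Nu s t"
proof -
  assume s: "s \<in> I"
  have "((\<lambda>s. gauss_map X s t) has_vector_derivative (- (cos t *\<^sub>R Hd s + sin t *\<^sub>R Bd s))) (at s)"
    by (rule has_vector_derivative_transform_within_open[OF Nf_u_deriv[OF s], where S=I])
      (use s gauss in auto)
  then have "pd_u (gauss_map X) s t = - (cos t *\<^sub>R Hd s + sin t *\<^sub>R Bd s)"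
    unfolding pd_u_def using vector_derivative_at by blast
  also have "\<dots> = Nu s t" unfolding Nu_def Hd_frame[OF s] Bd_frame[OF s]
    by (simp add: algebra_simps)
  finally show ?thesis .
qed

lemma pdv_N: "s \<in> I \<Longrightarrow> pd_v (gauss_map X) s t = Nv s t"
proof -
  assume s: "s \<in> I"
  have "((\<lambda>t. Nf s t) has_vector_derivative Nv s t) (at t)"
    unfolding Nf_def Nv_def by (auto intro!: derivative_eq_intros simp: algebra_simps)
  moreover have "gauss_map X s = Nf s" by (rule ext) (simp add: gauss[OF s])
  ultimately show ?thesis unfolding pd_v_def using vector_derivative_at by simp
qed

lemma IIg: "s \<in> I \<Longrightarrow> II_g X s t = r"
proof -
  assume s: "s \<in> I"
  have "((\<lambda>t. pd_v X s t) has_vector_derivative (r *\<^sub>R Nf s t)) (at t)"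
    unfolding pdv_X Xv_def Nf_def by (auto intro!: derivative_eq_intros simp: algebra_simps)
  then have "pd_v (pd_v X) s t = r *\<^sub>R Nf s t" unfolding pd_v_def[of "pd_v X"]
    using vector_derivative_at by blast
  then show ?thesis unfolding II_g_def gauss[OF s] using Nf_unit[OF s, of t]
    by simp
qed

lemma IIf: "s \<in> I \<Longrightarrow> II_f X s t = r * \<tau> s"
proof -
  assume s: "s \<in> I"
  have "((\<lambda>t. pd_u X s t) has_vector_derivative
     (r * \<kappa> s * sin t) *\<^sub>R T s + (r * \<tau> s) *\<^sub>R Nf s t) (at t)"
    unfolding pdu_X[OF s] Xu_def \<delta>_def Nf_def by (auto intro!: derivative_eq_intros simp: algebra_simps)
  then have "pd_v (pd_u X) s t = (r * \<kappa> s * sin t) *\<^sub>R T s + (r * \<tau> s) *\<^sub>R Nf s t" unfolding pd_v_def[of "pd_u X"]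
    using vector_derivative_at by blast
  moreover note Nf_T[OF s, of t] Nf_unit[OF s, of t]
  ultimately show ?thesis unfolding II_f_def gauss[OF s]
    by (simp add: inner_add_left)
qed

end



context tubeL begin

lemma N_u_deriv: "s \<in> I \<Longrightarrow> ((\<lambda>s. gauss_map X s t) has_vector_derivative Nu s t) (at s)"
proof -
  assume s: "s \<in> I"
  have "((\<lambda>s. gauss_map X s t) has_vector_derivative (- (cos t *\<^sub>R Hd s + sin t *\<^sub>R Bd s))) (at s)"
    by (rule has_vector_derivative_transform_within_open[OF Nf_u_deriv[OF s], where S=I])
      (use s gauss in auto)
  moreover have "- (cos t *\<^sub>R Hd s + sin t *\<^sub>R Bd s) = Nu s t" unfolding Nu_def Hd_frame[OF s] Bd_frame[OF s]
    by (simp add: algebra_simps)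
  ultimately show ?thesis by simp
qed

lemma inner_simps_fr:
  assumes s: "s \<in> I"
  shows "T s \<bullet> T s = 1" "H s \<bullet> H s = 1" "B s \<bullet> B s = 1" "T s \<bullet> H s = 0" "H s \<bullet> T s = 0"
    "T s \<bullet> B s = 0" "B s \<bullet> T s = 0" "H s \<bullet> B s = 0" "B s \<bullet> H s = 0"
  using fr[OF s] TT[OF s] HH[OF s] TH[OF s] by auto

lemmas ips = inner_add_left inner_add_right inner_diff_left inner_diff_right inner_minus_left inner_minus_right
  inner_scaleR_left inner_scaleR_right

lemma XuN: "s \<in> I \<Longrightarrow> Xu s t \<bullet> Nf s t = 0"
  using inner_simps_fr[of s] unfolding Xu_def Nf_def by (simp add: ips algebra_simps)

lemma XuNu: "s \<in> I \<Longrightarrow> Xu s t \<bullet> Nu s t = \<delta> s t * \<kappa> s * cos t - r * (\<tau> s)^2"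
proof -
  assume s: "s \<in> I"
  show ?thesis
    using inner_simps_fr[OF s] unfolding Xu_def Nu_def 
    apply (simp add: ips algebra_simps power2_eq_square)
    using sin_cos_squared_add[of t] by algebra
qed

lemma IIe: "s \<in> I \<Longrightarrow> II_e X s t = r * (\<tau> s)^2 - \<delta> s t * \<kappa> s * cos t"
proof -
  assume s: "s \<in> I"
  have e1: "\<And>s'. s' \<in> I \<Longrightarrow> pd_u X s' t = T s' + (r * cos t) *\<^sub>R Hd s' + (r * sin t) *\<^sub>R Bd s'"
    unfolding pd_u_def using Xs_deriv vector_derivative_at by blast
  have "(\<lambda>s'. T s' + (r * cos t) *\<^sub>R Hd s' + (r * sin t) *\<^sub>R Bd s') differentiable (at s)"
    using T_diff[OF s] Hd_diff[OF s] Bd_diff[OF s] by (intro derivative_intros) auto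
  then have "(\<lambda>s'. pd_u X s' t) differentiable (at s)"
    by (rule diff_transform[where S=I]) (use s e1 in auto)
  then have d1: "((\<lambda>s'. pd_u X s' t) has_vector_derivative pd_u (pd_u X) s t) (at s)"
    unfolding pd_u_def[of "pd_u X"] by (simp add: vector_derivative_works[symmetric])
  have "((\<lambda>s'. pd_u X s' t \<bullet> gauss_map X s' t) has_real_derivative
      (pd_u X s t \<bullet> Nu s t + pd_u (pd_u X) s t \<bullet> gauss_map X s t)) (at s)"
    by (rule hvd_inner[OF d1 N_u_deriv[OF s]])
  then have "pd_u X s t \<bullet> Nu s t + pd_u (pd_u X) s t \<bullet> gauss_map X s t = 0"
    by (rule const_deriv[where S=I]) (use s in \<open>auto simp: pdu_X gauss XuN\<close>)
  then show ?thesis unfolding II_e_def using XuNu[OF s] pdu_X[OF s] by simp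
qed

lemma IIdet: "s \<in> I \<Longrightarrow> II_det X s t = - (r * \<delta> s t * \<kappa> s * cos t)"
proof -
  assume s: "s \<in> I"
  show ?thesis unfolding II_det_def IIe[OF s] IIf[OF s] IIg[OF s] by (simp add: algebra_simps power2_eq_square)
qed

end



lemma differentiable_sqrt: "f differentiable (at x) \<Longrightarrow> 0 < f x \<Longrightarrow> (\<lambda>x. sqrt (f x)) differentiable (at x)"
  unfolding differentiable_def using has_derivative_real_sqrt by blast

context tubeL begin

definition "F \<equiv> gauss_map X"
definition "Q1 s t = (sqrt \<bar>II_det X s t\<bar> / II_det X s t) *\<^sub>R
                 (II_g X s t *\<^sub>R pd_u F s t - II_f X s t *\<^sub>R pd_v F s t)"
definition "Q2 s t = (sqrt \<bar>II_det X s t\<bar> / II_det X s t) *\<^sub>R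
                 (II_e X s t *\<^sub>R pd_v F s t - II_f X s t *\<^sub>R pd_u F s t)"

lemma lap_eq: "lap_II X F u v = - (1 / sqrt \<bar>II_det X u v\<bar>) *\<^sub>R (pd_u Q1 u v + pd_v Q2 u v)"
  unfolding lap_II_def Q1_def[abs_def] Q2_def[abs_def] ..

definition "w c s = - (sqrt (r * (1 - r * \<kappa> s * c) * \<kappa> s * \<bar>c\<bar>) / (1 - r * \<kappa> s * c))"

lemma Q1_eq: "s \<in> I \<Longrightarrow> cos t \<noteq> 0 \<Longrightarrow> Q1 s t = w (cos t) s *\<^sub>R T s"
proof -
  assume s: "s \<in> I" and c: "cos t \<noteq> 0"
  have dp: "\<delta> s t > 0" using delta_pos[OF s] by (simp add: \<delta>_def)
  have k: "\<kappa> s > 0" using kp[OF s] .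
  have "II_g X s t *\<^sub>R pd_u F s t - II_f X s t *\<^sub>R pd_v F s t = (r * \<kappa> s * cos t) *\<^sub>R T s"
    unfolding F_def IIg[OF s] IIf[OF s] pdu_N[OF s] pdv_N[OF s] Nu_def Nv_def
    by (simp add: algebra_simps)
  moreover have "\<bar>II_det X s t\<bar> = r * \<delta> s t * \<kappa> s * \<bar>cos t\<bar>"
    unfolding IIdet[OF s] using r0 dp k by (simp add: abs_mult)
  moreover have "sqrt (r * \<delta> s t * \<kappa> s * \<bar>cos t\<bar>) / II_det X s t * (r * \<kappa> s * cos t) = w (cos t) s"
    unfolding IIdet[OF s] w_def using r0 dp k c by (simp add: \<delta>_def field_simps)
  ultimately show ?thesis unfolding Q1_def by simp
qed

lemma pdu_Q1_H: assumes u: "u \<in> I" and c: "cos t \<noteq> 0"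
  shows "pd_u Q1 u t \<bullet> H u = w (cos t) u * \<kappa> u"
proof -
  have "w (cos t) differentiable (at u)"
    unfolding w_def[abs_def] using k_diff[OF u] kp[OF u] delta_pos[OF u, of t] r0 c
    by (intro derivative_intros differentiable_sqrt) (auto simp: \<delta>_def)
  then obtain w1 where w1: "(w (cos t) has_real_derivative w1) (at u)"
    using real_differentiable_def by blast
  have "((\<lambda>s. w (cos t) s *\<^sub>R T s) has_vector_derivative (w (cos t) u *\<^sub>R vd 2 a u + w1 *\<^sub>R T u)) (at u)"
    by (rule has_vector_derivative_scaleR[OF w1 T_deriv[OF u]])
  then have "((\<lambda>s. Q1 s t) has_vector_derivative (w (cos t) u *\<^sub>R vd 2 a u + w1 *\<^sub>R T u)) (at u)"
    by (rule has_vector_derivative_transform_within_open[where S=I]) (use u Q1_eq c in auto)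
  then have "pd_u Q1 u t = w (cos t) u *\<^sub>R vd 2 a u + w1 *\<^sub>R T u"
    unfolding pd_u_def using vector_derivative_at by blast
  then show ?thesis using A2[OF u] HH[OF u] TH[OF u] by (simp add: ips)
qed

end



context tubeL begin

definition "gg u \<sigma> t = r * (1 - r * \<kappa> u * cos t) * \<kappa> u * (\<sigma> * cos t)"

lemma Q2_eq: assumes s: "s \<in> I" and sg: "\<sigma> = 1 \<or> \<sigma> = -1" and t: "0 < \<sigma> * cos t"
  shows "Q2 s t = (sqrt (gg s \<sigma> t) / r) *\<^sub>R Nv s t + (sqrt (gg s \<sigma> t) * \<tau> s / \<delta> s t) *\<^sub>R T s"
proof -
  have dp: "\<delta> s t > 0" using delta_pos[OF s] by (simp add: \<delta>_def)
  have k: "\<kappa> s > 0" using kp[OF s] .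
  have c: "cos t \<noteq> 0" using t by auto
  have ac: "\<bar>cos t\<bar> = \<sigma> * cos t"
    using sg t by auto
  have E1: "II_e X s t *\<^sub>R pd_v F s t - II_f X s t *\<^sub>R pd_u F s t
     = (- (\<delta> s t * \<kappa> s * cos t)) *\<^sub>R Nv s t + (- (r * \<tau> s * \<kappa> s * cos t)) *\<^sub>R T s"
    unfolding F_def IIe[OF s] IIf[OF s] pdu_N[OF s] pdv_N[OF s] Nu_def Nv_def
    by (simp add: algebra_simps power2_eq_square)
  have E2: "\<bar>II_det X s t\<bar> = gg s \<sigma> t"
    unfolding IIdet[OF s] gg_def using r0 dp k ac by (simp add: abs_mult \<delta>_def)
  have E3: "sqrt (gg s \<sigma> t) / II_det X s t * (- (\<delta> s t * \<kappa> s * cos t)) = sqrt (gg s \<sigma> t) / r"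
    unfolding IIdet[OF s] using r0 dp k c by (simp add: field_simps)
  have E4: "sqrt (gg s \<sigma> t) / II_det X s t * (- (r * \<tau> s * \<kappa> s * cos t)) = sqrt (gg s \<sigma> t) * \<tau> s / \<delta> s t"
    unfolding IIdet[OF s] using r0 dp k c by (simp add: field_simps)
  show ?thesis unfolding Q2_def E1 E2 scaleR_add_right scaleR_scaleR E3 E4 ..
qed

definition "gg1 u \<sigma> t = r * (r * \<kappa> u * sin t) * \<kappa> u * (\<sigma> * cos t) + r * (1 - r * \<kappa> u * cos t) * \<kappa> u * (\<sigma> * - sin t)"

lemma pdv_Q2_H: assumes u: "u \<in> I" and sg: "\<sigma> = 1 \<or> \<sigma> = -1" and t: "0 < \<sigma> * cos t"
  shows "pd_v Q2 u t \<bullet> H u = (sqrt (gg u \<sigma> t) / r) * cos t + (inverse (sqrt (gg u \<sigma> t)) / 2 * gg1 u \<sigma> t / r) * sin t"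
proof -
  have dp: "\<delta> u t > 0" using delta_pos[OF u] by (simp add: \<delta>_def)
  have k: "\<kappa> u > 0" using kp[OF u] .
  have gpos: "gg u \<sigma> t > 0" unfolding gg_def using r0 k dp t by (simp add: \<delta>_def)
  have g1: "(gg u \<sigma> has_real_derivative gg1 u \<sigma> t) (at t)"
    unfolding gg_def[abs_def] gg1_def by (auto intro!: derivative_eq_intros simp: algebra_simps)
  have m1: "((\<lambda>t. sqrt (gg u \<sigma> t) / r) has_real_derivative (inverse (sqrt (gg u \<sigma> t)) / 2 * gg1 u \<sigma> t / r)) (at t)"
    using DERIV_chain2[where f=sqrt and g="gg u \<sigma>", OF DERIV_real_sqrt[OF gpos] g1] by (intro DERIV_cdivide)
  have Nvd: "((\<lambda>t. Nv u t) has_vector_derivative (cos t *\<^sub>R H u + sin t *\<^sub>R B u)) (at t)"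
    unfolding Nv_def by (auto intro!: derivative_eq_intros simp: algebra_simps)
  have cd: "cos differentiable (at t)" using DERIV_cos real_differentiable_def by blast
  have "(\<lambda>t. sqrt (gg u \<sigma> t) * \<tau> u / \<delta> u t) differentiable (at t)"
    unfolding \<delta>_def using gpos dp unfolding \<delta>_def gg_def[abs_def]
    using cd by (intro derivative_intros differentiable_sqrt) (auto simp: gg_def)
  then obtain p1 where p1: "((\<lambda>t. sqrt (gg u \<sigma> t) * \<tau> u / \<delta> u t) has_real_derivative p1) (at t)"
    using real_differentiable_def by blast
  define D where "D = ((sqrt (gg u \<sigma> t) / r) *\<^sub>R (cos t *\<^sub>R H u + sin t *\<^sub>R B u) + (inverse (sqrt (gg u \<sigma> t)) / 2 * gg1 u \<sigma> t / r) *\<^sub>R Nv u t)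
     + ((sqrt (gg u \<sigma> t) * \<tau> u / \<delta> u t) *\<^sub>R 0 + p1 *\<^sub>R T u)"
  have "((\<lambda>t. (sqrt (gg u \<sigma> t) / r) *\<^sub>R Nv u t + (sqrt (gg u \<sigma> t) * \<tau> u / \<delta> u t) *\<^sub>R T u) has_vector_derivative D) (at t)"
    unfolding D_def
    by (intro has_vector_derivative_add has_vector_derivative_scaleR m1 Nvd p1 has_vector_derivative_const)
  then have "((\<lambda>t. Q2 u t) has_vector_derivative D) (at t)"
    by (rule has_vector_derivative_transform_within_open[where S="{t. 0 < \<sigma> * cos t}"])
      (use t Q2_eq[OF u sg] in \<open>auto intro!: open_Collect_less continuous_intros\<close>)
  then have "pd_v Q2 u t = D"
    unfolding pd_v_def using vector_derivative_at by blast
  then show ?thesis unfolding D_def Nv_def using inner_simps_fr[OF u] by (simp add: ips)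
qed

end



context tubeL begin

lemma absdet: assumes s: "s \<in> I" and sg: "\<sigma> = 1 \<or> \<sigma> = -1" and t: "0 < \<sigma> * cos t"
  shows "\<bar>II_det X s t\<bar> = gg s \<sigma> t"
proof -
  have dp: "\<delta> s t > 0" using delta_pos[OF s] by (simp add: \<delta>_def)
  have k: "\<kappa> s > 0" using kp[OF s] .
  have ac: "\<bar>cos t\<bar> = \<sigma> * cos t" using sg t by auto
  show ?thesis unfolding IIdet[OF s] gg_def using r0 dp k ac by (simp add: abs_mult \<delta>_def)
qed

lemma lapH: assumes u: "u \<in> I" and c: "cos t \<noteq> 0"
  shows "lap_II X F u t \<bullet> H u = \<kappa> u / (1 - r * \<kappa> u * cos t) - cos t / r
     - (sin t)^2 * \<kappa> u / (2 * (1 - r * \<kappa> u * cos t)) + (sin t)^2 / (2 * r * cos t)"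
proof -
  define \<sigma> where "\<sigma> = (if cos t > 0 then 1 else (-1::real))"
  have sg: "\<sigma> = 1 \<or> \<sigma> = -1" unfolding \<sigma>_def by auto
  have st: "0 < \<sigma> * cos t" unfolding \<sigma>_def using c by auto
  have dp: "0 < 1 - r * \<kappa> u * cos t" using delta_pos[OF u] .
  have k: "\<kappa> u > 0" using kp[OF u] .
  define g where "g = gg u \<sigma> t"
  define g1 where "g1 = gg1 u \<sigma> t"
  define M where "M = sqrt g"
  have gpos: "g > 0" unfolding g_def gg_def using r0 k dp st by simp
  have Mpos: "M > 0" unfolding M_def using gpos by simp
  have M2: "M * M = g" unfolding M_def using gpos by simp
  have ac: "\<bar>cos t\<bar> = \<sigma> * cos t" using sg st by auto
  have wM: "w (cos t) u = - (M / (1 - r * \<kappa> u * cos t))"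
    unfolding w_def M_def g_def gg_def ac by (simp add: mult.assoc)
  have "lap_II X F u t \<bullet> H u = - (1 / M) * (w (cos t) u * \<kappa> u + ((M / r) * cos t + (inverse M / 2 * g1 / r) * sin t))"
    unfolding lap_eq inner_scaleR_left inner_add_left pdu_Q1_H[OF u c] pdv_Q2_H[OF u sg st]
      absdet[OF u sg st] M_def g_def g1_def ..
  also have "\<dots> = \<kappa> u / (1 - r * \<kappa> u * cos t) - cos t / r - g1 * sin t / (2 * r * (M * M))"
    unfolding wM using Mpos r0 dp by (simp add: field_simps)
  also have "\<dots> = \<kappa> u / (1 - r * \<kappa> u * cos t) - cos t / r
     - (sin t)^2 * \<kappa> u / (2 * (1 - r * \<kappa> u * cos t)) + (sin t)^2 / (2 * r * cos t)"
  proof -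
    define d where "d = 1 - r * \<kappa> u * cos t"
    have gE: "g = r * d * \<kappa> u * \<sigma> * cos t" unfolding g_def gg_def d_def by simp
    have g1E: "g1 = r * \<kappa> u * \<sigma> * sin t * (r * \<kappa> u * cos t - d)" unfolding g1_def gg1_def d_def
      by (simp add: algebra_simps)
    have s0: "\<sigma> \<noteq> 0" using sg by auto
    have d0: "d \<noteq> 0" using dp d_def by simp
    have "g1 * sin t / (2 * r * g) = (sin t)^2 * (r * \<kappa> u * cos t - d) / (2 * r * d * cos t)"
      unfolding gE g1E using s0 d0 k r0 c by (simp add: field_simps power2_eq_square)
    also have "\<dots> = (sin t)^2 * \<kappa> u / (2 * d) - (sin t)^2 / (2 * r * cos t)"
      using d0 r0 c by (simp add: field_simps power2_eq_square)
    finally show ?thesis unfolding M2 d_def[symmetric] by simp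
  qed
  finally show ?thesis .
qed

end



lemma cos_image_infinite:
  fixes p e :: real
  assumes e: "e > 0" and c0: "cos p \<noteq> 0"
  shows "infinite (cos ` ball p e)"
proof
  assume fin: "finite (cos ` ball p e)"
  define d where "d = min (e/2) 1"
  have d0: "0 < d" "d < e" "d \<le> 1" unfolding d_def using e by auto
  have cd: "cos d < 1" using cos_monotone_0_pi[of 0 d] d0 pi_gt3 by simp
  have "\<exists>q \<in> ball p e. cos q \<noteq> cos p"
  proof (rule ccontr)
    assume nt: "\<not> ?thesis"
    moreover have "p + d \<in> ball p e" "p - d \<in> ball p e" using d0 by (simp_all add: dist_real_def)
    ultimately have cc: "cos (p + d) = cos p" "cos (p - d) = cos p" by blast+
    have "cos (p + d) + cos (p - d) = 2 * cos p * cos d" by (simp add: cos_add cos_diff)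
    then have "2 * cos p * cos d = 2 * cos p" using cc by simp
    then have "cos d = 1" using c0 by simp
    then show False using cd by simp
  qed
  then obtain q where q: "q \<in> ball p e" "cos q \<noteq> cos p" by blast
  have conn: "connected (cos ` ball p e)"
    by (intro connected_continuous_image continuous_intros connected_ball)
  have p: "p \<in> ball p e" using e by simp
  have sub: "{min (cos p) (cos q) .. max (cos p) (cos q)} \<subseteq> cos ` ball p e"
  proof -
    have a: "cos p \<in> cos ` ball p e" "cos q \<in> cos ` ball p e" using p q(1) by auto
    show ?thesis
    proof (cases "cos p \<le> cos q")
      case True
      then show ?thesis using connected_contains_Icc[OF conn a(1) a(2)] by (simp add: min_def max_def)
    next
      case False
      then show ?thesis using connected_contains_Icc[OF conn a(2) a(1)] by (simp add: min_def max_def)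
    qed
  qed
  have "infinite {min (cos p) (cos q) .. max (cos p) (cos q)}"
    using q(2) by (intro infinite_Icc) (auto simp: min_def max_def)
  then show False using sub fin finite_subset by blast
qed

context tubeL begin

lemma A_H: "s \<in> I \<Longrightarrow> (A *v F s t) \<bullet> H s = - (cos t * ((A *v H s) \<bullet> H s) + sin t * ((A *v B s) \<bullet> H s))"
  unfolding F_def gauss Nf_def
  by (simp add: vec.neg vec.add vec.diff matrix_vector_mult_scaleR ips)

lemma no_A:
  assumes W: "open W" "W \<noteq> {}" "\<forall>(u, \<phi>)\<in>W. \<alpha> < u \<and> u < \<beta> \<and> cos \<phi> \<noteq> 0"
    and A: "\<forall>(u, \<phi>)\<in>W. lap_II X F u \<phi> = A *v F u \<phi>"
  shows False
proof -
  obtain u0 p0 where up: "(u0, p0) \<in> W" using W(2) by auto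
  then obtain e where e: "e > 0" "ball (u0, p0) e \<subseteq> W" using W(1) open_contains_ball by blast
  have inW: "(u0, p) \<in> W" if "p \<in> ball p0 e" for p
    using that e(2) by (auto simp: dist_Pair_Pair dist_commute)
  have u0: "u0 \<in> I" using up W(3) by auto
  have c0: "cos p0 \<noteq> 0" using up W(3) by auto
  define K where "K = \<kappa> u0"
  define al where "al = (A *v H u0) \<bullet> H u0"
  define be where "be = (A *v B u0) \<bullet> H u0"
  define P where "P c = 2*r*c*K - 2*c^2*(1 - r*K*c) - r*c*K*(1 - c^2) + (1 - r*K*c)*(1 - c^2)
       + 2*r*c^2*(1 - r*K*c)*al" for c
  define Q where "Q c = - (2*r*c*(1 - r*K*c)*be)" for c
  have k: "K > 0" unfolding K_def using kp[OF u0] .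
  have key: "P (cos p) ^ 2 - Q (cos p) ^ 2 * (1 - (cos p)^2) = 0" if p: "p \<in> ball p0 e" for p
  proof -
    have pW: "(u0, p) \<in> W" using inW[OF p] .
    have c: "cos p \<noteq> 0" using pW W(3) by auto
    have dp: "0 < 1 - r * K * cos p" using delta_pos[OF u0] unfolding K_def .
    have "lap_II X F u0 p \<bullet> H u0 = (A *v F u0 p) \<bullet> H u0" using A pW by auto
    then have E0: "K / (1 - r * K * cos p) - cos p / r - (sin p)^2 * K / (2 * (1 - r * K * cos p))
        + (sin p)^2 / (2 * r * cos p) = - (cos p * al + sin p * be)"
      unfolding lapH[OF u0 c] A_H[OF u0] K_def al_def be_def .
    define d where "d = 1 - r * K * cos p"
    have d0: "d \<noteq> 0" using dp d_def by simp
    have t1: "2*r*cos p*d*(K/d) = 2*r*cos p*K" using d0 by simp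
    have t2: "2*r*cos p*d*(cos p/r) = 2*(cos p)^2*d" using r0 by (simp add: power2_eq_square)
    have t3: "2*r*cos p*d*((sin p)^2*K/(2*d)) = r*cos p*K*(sin p)^2" using d0 by simp
    have t4: "2*r*cos p*d*((sin p)^2/(2*r*cos p)) = d*(sin p)^2" using r0 c by simp
    have E0': "K / d - cos p / r - (sin p)^2 * K / (2 * d) + (sin p)^2 / (2 * r * cos p) = - (cos p * al + sin p * be)"
      using E0 unfolding d_def .
    have "2*r*cos p*d*(K / d - cos p / r - (sin p)^2 * K / (2 * d) + (sin p)^2 / (2 * r * cos p))
       = 2*r*cos p*d*(- (cos p * al + sin p * be))" unfolding E0' ..
    then have E1: "2*r*cos p*K - 2*(cos p)^2*d - r*cos p*K*(sin p)^2 + d*(sin p)^2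
        = - (2*r*cos p*d*(cos p * al + sin p * be))"
      unfolding ring_distribs t1 t2 t3 t4 by (simp add: algebra_simps)
    have s2: "(sin p)^2 = 1 - (cos p)^2" by (simp add: sin_squared_eq)
    have PQ: "P (cos p) = Q (cos p) * sin p"
      using E1 unfolding P_def Q_def s2 d_def by (simp add: algebra_simps power2_eq_square)
    show ?thesis unfolding PQ s2[symmetric] by (simp add: power_mult_distrib)
  qed
  define Xp where "Xp = [:0, 1::real:]"
  define Dp where "Dp = [:1, - r * K:]"
  define Pp where "Pp = smult (2*r*K) Xp - smult 2 (Xp^2 * Dp) - smult (r*K) (Xp * (1 - Xp^2)) + Dp * (1 - Xp^2)
      + smult (2*r*al) (Xp^2 * Dp)"
  define Qp where "Qp = smult (- (2*r*be)) (Xp * Dp)"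
  define Rp where "Rp = Pp^2 - Qp^2 * (1 - Xp^2)"
  have eX: "poly Xp c = c" for c unfolding Xp_def by simp
  have eD: "poly Dp c = 1 - r * K * c" for c unfolding Dp_def by simp
  have eP: "poly Pp c = P c" for c unfolding Pp_def P_def by (simp add: eX eD)
  have eQ: "poly Qp c = Q c" for c unfolding Qp_def Q_def by (simp add: eX eD)
  have evR: "poly Rp c = P c ^ 2 - Q c ^ 2 * (1 - c^2)" for c
    unfolding Rp_def by (simp add: eP eQ eX)
  have "poly Rp 0 = 1" unfolding evR P_def Q_def by simp
  then have "Rp \<noteq> 0" by auto
  then have fin: "finite {c. poly Rp c = 0}" by (rule poly_roots_finite)
  have "cos ` ball p0 e \<subseteq> {c. poly Rp c = 0}" using key evR by auto
  then have "finite (cos ` ball p0 e)" using fin finite_subset by blast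
  then show False using cos_image_infinite[OF e(1) c0] by simp
qed

end

theorem theorem1:
  fixes a :: "real \<Rightarrow> real^3" and \<alpha> \<beta> r :: real and W :: "(real \<times> real) set"
  assumes "\<alpha> < \<beta>"
    and "smooth_curve_on {\<alpha><..<\<beta>} a"
    and "\<forall>u\<in>{\<alpha><..<\<beta>}. norm (vd 1 a u) = 1"
    and "\<forall>u\<in>{\<alpha><..<\<beta>}. curvature a u > 0"
    and "0 < r"
    and "r < (INF u\<in>{\<alpha><..<\<beta>}. 1 / \<bar>curvature a u\<bar>)"
    and "open W" and "W \<noteq> {}"
    and "\<forall>(u, \<phi>)\<in>W. \<alpha> < u \<and> u < \<beta> \<and> cos \<phi> \<noteq> 0"
  shows "\<not> (\<exists>A :: real^3^3. \<forall>(u, \<phi>)\<in>W.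
            lap_II (tube a r) (gauss_map (tube a r)) u \<phi> = A *v gauss_map (tube a r) u \<phi>)"
proof
  interpret tubeL a \<alpha> \<beta> r using assms by unfold_locales auto
  assume "\<exists>A :: real^3^3. \<forall>(u, \<phi>)\<in>W.
            lap_II (tube a r) (gauss_map (tube a r)) u \<phi> = A *v gauss_map (tube a r) u \<phi>"
  then obtain A :: "real^3^3" where A: "\<forall>(u, \<phi>)\<in>W. lap_II X F u \<phi> = A *v F u \<phi>"
    unfolding F_def by blast
  show False by (rule no_A[OF assms(7,8,9) A])
qed



end
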